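(* Let $(a_1,a_2)\in C$ and let $X$ be the AR(2)-process with coefficients $a_1,a_2$. Assume that $\mathbb{P}(Y_1<0)>0$ and that $\mathbb{P}(Y_1\ge x)\precsim(\log x)^{-\alpha}$ as $x\to\infty$ for some $\alpha>1$. Then for every $x\ge0$, $$\mathbb{P}\Big(\sup_{n\ge1}X_n\le x\Big)=\lim_{N\to\infty}p_N(x)>0 .$$
   Context: Let $(Y_n)_{n\ge1}$ be i.i.d. nondegenerate real random variables. The AR(2)-process is $X_n=a_1X_{n-1}+a_2X_{n-2}+Y_n$ for $n\ge1$ with $X_n=0$ for $n\le0$; $p_N(x):=\mathbb{P}(\sup_{n=1,\dots,N}X_n\le x)$. The region $C:=\{a_1\ge2,\ a_1^2+4a_2>0\}\cup\{a_1\in(0,2),\ a_1+a_2>1\}\cup\{a_1^2+4a_2=0,\ a_1>2\}\cup\{a_1=0,\ a_2>1\}$. $f\precsim g$ means $\limsup f/g<\infty$. *)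

theory Defs
  imports "HOL-Probability.Probability" "HOL-Library.Landau_Symbols"
begin

text \<open>AR(2) process X_n = a1 X_{n-1} + a2 X_{n-2} + Y_n (n >= 1), X_n = 0 for n <= 0.
  Indices n <= 0 are all represented by index 0 (X 0 = 0, and X_{-1} = 0 gives X 1 = Y 1).
  The innovation Y 0 is never used.\<close>
fun AR2 :: "real \<Rightarrow> real \<Rightarrow> (nat \<Rightarrow> 'a \<Rightarrow> real) \<Rightarrow> nat \<Rightarrow> 'a \<Rightarrow> real" where
  "AR2 a1 a2 Y 0 w = 0"
| "AR2 a1 a2 Y (Suc 0) w = Y 1 w"
| "AR2 a1 a2 Y (Suc (Suc n)) w =
     a1 * AR2 a1 a2 Y (Suc n) w + a2 * AR2 a1 a2 Y n w + Y (Suc (Suc n)) w"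

definition pN :: "'a measure \<Rightarrow> real \<Rightarrow> real \<Rightarrow> (nat \<Rightarrow> 'a \<Rightarrow> real) \<Rightarrow> nat \<Rightarrow> real \<Rightarrow> real" where
  "pN M a1 a2 Y N x = measure M {w \<in> space M. \<forall>n\<in>{1..N}. AR2 a1 a2 Y n w \<le> x}"

definition regionC :: "(real \<times> real) set" where
  "regionC =
     {(a1, a2). a1 \<ge> 2 \<and> a1\<^sup>2 + 4 * a2 > 0}
   \<union> {(a1, a2). 0 < a1 \<and> a1 < 2 \<and> a1 + a2 > 1}
   \<union> {(a1, a2). a1\<^sup>2 + 4 * a2 = 0 \<and> a1 > 2}
   \<union> {(a1, a2). a1 = 0 \<and> a2 > 1}"

end

theory Submission
  imports Defs
begin


fun hh :: "real \<Rightarrow> real \<Rightarrow> nat \<Rightarrow> real" where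
  "hh r1 r2 0 = 1"
| "hh r1 r2 (Suc m) = r1 ^ Suc m + r2 * hh r1 r2 m"

lemma hh_alt: "hh r1 r2 (Suc m) = r2 ^ Suc m + r1 * hh r1 r2 m"
proof (induction m)
  case 0 then show ?case by simp
next
  case (Suc m)
  have "hh r1 r2 (Suc (Suc m)) = r1 ^ Suc (Suc m) + r2 * hh r1 r2 (Suc m)" by simp
  also have "\<dots> = r1 ^ Suc (Suc m) + r2 * (r2 ^ Suc m + r1 * hh r1 r2 m)" using Suc by simp
  also have "\<dots> = r2 ^ Suc (Suc m) + r1 * (r1 ^ Suc m + r2 * hh r1 r2 m)" by (simp add: algebra_simps)
  finally show ?case by simp
qed

lemma hh_rec: "hh r1 r2 (Suc (Suc m)) = (r1 + r2) * hh r1 r2 (Suc m) + (-(r1*r2)) * hh r1 r2 m"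
proof -
  have "hh r1 r2 (Suc (Suc m)) = r1 ^ Suc (Suc m) + r2 * hh r1 r2 (Suc m)" by simp
  also have "r1 ^ Suc (Suc m) = r1 * (hh r1 r2 (Suc m) - r2 * hh r1 r2 m)" by simp
  finally show ?thesis by (simp add: algebra_simps)
qed

lemma hh_neg: assumes "r2 \<le> 0" "-r1 \<le> r2" shows "0 \<le> hh r1 r2 m \<and> hh r1 r2 m \<le> r1 ^ m"
proof (induction m)
  case 0 then show ?case by simp
next
  case (Suc m)
  have a: "r2 * hh r1 r2 m \<le> 0" using Suc assms by (simp add: mult_nonpos_nonneg)
  have b: "-r1 * hh r1 r2 m \<le> r2 * hh r1 r2 m" using Suc assms by (intro mult_right_mono) auto
  have c: "r1 * hh r1 r2 m \<le> r1 * r1 ^ m" using Suc assms by (intro mult_left_mono) auto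
  show ?case using a b c by simp
qed

lemma hh_nonneg: assumes "-r1 \<le> r2" "0 \<le> r1" shows "0 \<le> hh r1 r2 m"
proof (cases "r2 \<le> 0")
  case True then show ?thesis using hh_neg[OF True assms(1)] by simp
next
  case False then show ?thesis using assms by (induction m) (auto intro!: add_nonneg_nonneg mult_nonneg_nonneg)
qed

lemma hh_grow: assumes "0 \<le> r2" "0 \<le> r1" shows "r1 ^ j * hh r1 r2 m \<le> hh r1 r2 (m + j)"
proof (induction j)
  case 0 then show ?case by simp
next
  case (Suc j)
  have "r1 ^ Suc j * hh r1 r2 m = r1 * (r1 ^ j * hh r1 r2 m)" by simp
  also have "\<dots> \<le> r1 * hh r1 r2 (m + j)" using Suc assms by (intro mult_left_mono) auto
  also have "\<dots> \<le> hh r1 r2 (m + Suc j)" using assms by (simp add: hh_alt del: hh.simps)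
  finally show ?case .
qed

lemma hh_L: assumes "1 \<le> r1" "-r1 \<le> r2" "r2 \<le> r1" "2 \<le> k" "k \<le> n"
  shows "r1 ^ k * hh r1 r2 (n - k) \<le> r1^2 * (hh r1 r2 (n - 1) + hh r1 r2 (n - 2))"
proof (cases "0 \<le> r2")
  case True
  have "r1 ^ (k-1) * hh r1 r2 (n - k) \<le> hh r1 r2 (n - k + (k-1))"
    by (rule hh_grow) (use True assms in auto)
  also have "n - k + (k-1) = n - 1" using assms by simp
  finally have 1: "r1 ^ (k-1) * hh r1 r2 (n - k) \<le> hh r1 r2 (n - 1)" .
  have "r1 ^ k * hh r1 r2 (n - k) = r1 * (r1 ^ (k-1) * hh r1 r2 (n - k))"
    using assms by (cases k) auto
  also have "\<dots> \<le> r1 * hh r1 r2 (n - 1)" using 1 assms by (intro mult_left_mono) auto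
  also have "\<dots> \<le> r1^2 * hh r1 r2 (n - 1)"
    using assms hh_nonneg[of r1 r2 "n-1"] by (intro mult_right_mono) (auto simp: power2_eq_square)
  also have "\<dots> \<le> r1^2 * (hh r1 r2 (n - 1) + hh r1 r2 (n - 2))"
    using assms hh_nonneg[of r1 r2 "n-2"] by (intro mult_left_mono) auto
  finally show ?thesis .
next
  case False
  then have r2: "r2 \<le> 0" by simp
  have "r1 ^ k * hh r1 r2 (n - k) \<le> r1 ^ k * r1 ^ (n - k)"
    using hh_neg[OF r2 assms(2)] assms by (intro mult_left_mono) auto
  also have "\<dots> = r1 ^ n" using assms by (simp add: power_add[symmetric])
  also have "\<dots> = r1^2 * r1 ^ (n - 2)"
  proof -
    have "n = Suc (Suc (n - 2))" using assms by arith
    then have "r1 ^ n = r1 ^ Suc (Suc (n - 2))" by simp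
    then show ?thesis by (simp add: power2_eq_square)
  qed
  also have "r1 ^ (n - 2) \<le> hh r1 r2 (n - 1) + hh r1 r2 (n - 2)"
  proof -
    define m where "m = n - 2"
    have m: "n - 2 = m" "n - 1 = Suc m" using assms unfolding m_def by arith+
    have h1: "hh r1 r2 (Suc m) = r1 ^ Suc m + r2 * hh r1 r2 m" by simp
    have h2: "-r1 * hh r1 r2 m \<le> r2 * hh r1 r2 m"
      using hh_neg[OF r2 assms(2)] assms by (intro mult_right_mono) auto
    have h3: "(r1 - 1) * hh r1 r2 m \<le> (r1 - 1) * r1 ^ m"
      using hh_neg[OF r2 assms(2)] assms by (intro mult_left_mono) auto
    show ?thesis unfolding m using h1 h2 h3 by (simp add: algebra_simps)
  qed
  then have "r1^2 * r1 ^ (n - 2) \<le> r1^2 * (hh r1 r2 (n - 1) + hh r1 r2 (n - 2))"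
    by (intro mult_left_mono) auto
  finally show ?thesis .
qed

lemma AR2_repr:
  assumes "a1 = r1 + r2" "a2 = -(r1*r2)"
  shows "AR2 a1 a2 Y n w = (\<Sum>k\<in>{1..n}. hh r1 r2 (n - k) * Y k w)"
proof (induction n rule: less_induct)
  case (less n)
  show ?case
  proof (cases n)
    case 0 then show ?thesis by simp
  next
    case (Suc m) note n = this
    show ?thesis
    proof (cases m)
      case 0 then show ?thesis using n by simp
    next
      case (Suc p)
      have n2: "n = Suc (Suc p)" using n Suc by simp
      have IH1: "AR2 a1 a2 Y (Suc p) w = (\<Sum>k\<in>{1..Suc p}. hh r1 r2 (Suc p - k) * Y k w)"
        using less n2 by simp
      have IH0: "AR2 a1 a2 Y p w = (\<Sum>k\<in>{1..p}. hh r1 r2 (p - k) * Y k w)"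
        using less n2 by simp
      have S2: "(\<Sum>k\<in>{1..Suc (Suc p)}. hh r1 r2 (Suc (Suc p) - k) * Y k w)
          = (\<Sum>k\<in>{1..p}. hh r1 r2 (Suc (Suc p) - k) * Y k w) + hh r1 r2 1 * Y (Suc p) w + Y (Suc (Suc p)) w"
        by (simp add: sum.cl_ivl_Suc)
      have S1: "(\<Sum>k\<in>{1..Suc p}. hh r1 r2 (Suc p - k) * Y k w)
          = (\<Sum>k\<in>{1..p}. hh r1 r2 (Suc p - k) * Y k w) + Y (Suc p) w"
        by (simp add: sum.cl_ivl_Suc)
      have S3: "(\<Sum>k\<in>{1..p}. hh r1 r2 (Suc (Suc p) - k) * Y k w)
          = a1 * (\<Sum>k\<in>{1..p}. hh r1 r2 (Suc p - k) * Y k w) + a2 * (\<Sum>k\<in>{1..p}. hh r1 r2 (p - k) * Y k w)"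
      proof -
        have "(\<Sum>k\<in>{1..p}. hh r1 r2 (Suc (Suc p) - k) * Y k w)
           = (\<Sum>k\<in>{1..p}. a1 * (hh r1 r2 (Suc p - k) * Y k w) + a2 * (hh r1 r2 (p - k) * Y k w))"
        proof (rule sum.cong[OF refl])
          fix k assume "k \<in> {1..p}"
          then have e: "Suc (Suc p) - k = Suc (Suc (p - k))" "Suc p - k = Suc (p - k)" by auto
          show "hh r1 r2 (Suc (Suc p) - k) * Y k w = a1 * (hh r1 r2 (Suc p - k) * Y k w) + a2 * (hh r1 r2 (p - k) * Y k w)"
            unfolding e hh_rec[of r1 r2 "p - k"] assms by (simp add: algebra_simps del: hh.simps)
        qed
        also have "\<dots> = a1 * (\<Sum>k\<in>{1..p}. hh r1 r2 (Suc p - k) * Y k w) + a2 * (\<Sum>k\<in>{1..p}. hh r1 r2 (p - k) * Y k w)"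
          by (simp add: sum.distrib sum_distrib_left)
        finally show ?thesis .
      qed
      have h1: "hh r1 r2 1 = a1" using assms by simp
      show ?thesis unfolding n2 AR2.simps IH1 IH0 S2 S1 S3 h1 by (simp add: algebra_simps)
    qed
  qed
qed

lemma regionC_roots:
  assumes "(a1, a2) \<in> regionC"
  shows "\<exists>r1 r2. 1 < r1 \<and> -r1 \<le> r2 \<and> r2 \<le> r1 \<and> a1 = r1 + r2 \<and> a2 = -(r1*r2)"
proof -
  define D where "D = a1^2 + 4*a2"
  have c1: "0 \<le> D \<and> 0 \<le> a1 \<and> 2 < a1 + sqrt D" if h: "2 \<le> a1" "0 < D"
  proof -
    have "0 < sqrt D" using h by simp
    then show ?thesis using h by linarith
  qed
  have c2: "0 \<le> D \<and> 0 \<le> a1 \<and> 2 < a1 + sqrt D" if h: "0 < a1" "a1 < 2" "1 < a1 + a2"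
  proof -
    have "(2 - a1)^2 < D" using h unfolding D_def by (simp add: power2_eq_square algebra_simps)
    then have "2 - a1 < sqrt D" by (rule real_less_rsqrt)
    moreover have "0 \<le> D" using \<open>(2 - a1)^2 < D\<close> by (smt (verit) zero_le_power2)
    ultimately show ?thesis using h by linarith
  qed
  have c3: "0 \<le> D \<and> 0 \<le> a1 \<and> 2 < a1 + sqrt D" if h: "D = 0" "2 < a1"
    using h by simp
  have c4: "0 \<le> D \<and> 0 \<le> a1 \<and> 2 < a1 + sqrt D" if h: "a1 = 0" "1 < a2"
  proof -
    have "2^2 < D" using h unfolding D_def by simp
    then have "2 < sqrt D" by (rule real_less_rsqrt)
    then show ?thesis using h unfolding D_def by simp
  qed
  have key: "0 \<le> D \<and> 0 \<le> a1 \<and> 2 < a1 + sqrt D"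
    using assms c1 c2 c3 c4 unfolding regionC_def D_def by auto
  define r1 where "r1 = (a1 + sqrt D) / 2"
  define r2 where "r2 = (a1 - sqrt D) / 2"
  have sq: "sqrt D * sqrt D = D" using key by simp
  have sD: "0 \<le> sqrt D" using key by simp
  have 1: "1 < r1" unfolding r1_def using key by simp
  have 2: "-r1 \<le> r2" "r2 \<le> r1" "a1 = r1 + r2" unfolding r1_def r2_def using key sD by (simp_all add: field_simps)
  have 3: "r1 * r2 = (a1*a1 - sqrt D * sqrt D) / 4" unfolding r1_def r2_def by (simp add: algebra_simps)
  have 4: "a2 = -(r1*r2)" using key unfolding 3 sq D_def by (simp add: power2_eq_square)
  have "1 < r1 \<and> -r1 \<le> r2 \<and> r2 \<le> r1 \<and> a1 = r1 + r2 \<and> a2 = -(r1*r2)"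
    using 1 2 4 by blast
  then show ?thesis by blast
qed

lemma det_bound:
  assumes r: "1 < r1" "-r1 \<le> r2" "r2 \<le> r1" "a1 = r1 + r2" "a2 = -(r1*r2)"
    and e: "0 < e" and K: "3 \<le> K" and s: "0 < s"
    and geo: "\<And>n. (\<Sum>k\<in>{K..n}. (s/r1)^k) \<le> e / r1^2"
    and Yb: "\<And>k. 1 \<le> k \<Longrightarrow> Y k w \<le> (if k < K then -e else s^k)"
    and n: "1 \<le> n"
  shows "AR2 a1 a2 Y n w \<le> 0"
proof (cases "n = 1")
  case True
  then show ?thesis using Yb[of 1] K e by simp
next
  case False
  then have n2: "2 \<le> n" using n by simp
  define h where "h = hh r1 r2"
  define H where "H = h (n - 1) + h (n - 2)"
  have hnn: "0 \<le> h m" for m unfolding h_def using r by (intro hh_nonneg) auto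
  have HL: "r1 ^ k * h (n - k) \<le> r1^2 * H" if "2 \<le> k" "k \<le> n" for k
    unfolding h_def H_def using hh_L[of r1 r2 k n] r that by simp
  define g1 where "g1 k = (if k \<le> 2 then -e else 0)" for k :: nat
  define g2 where "g2 k = (if K \<le> k then s^k else 0)" for k :: nat
  have "AR2 a1 a2 Y n w = (\<Sum>k\<in>{1..n}. h (n - k) * Y k w)"
    unfolding h_def by (rule AR2_repr[OF r(4,5)])
  also have "\<dots> \<le> (\<Sum>k\<in>{1..n}. h (n - k) * (g1 k + g2 k))"
  proof (rule sum_mono)
    fix k assume k: "k \<in> {1..n}"
    have "Y k w \<le> g1 k + g2 k" using Yb[of k] k K e unfolding g1_def g2_def by auto
    then show "h (n - k) * Y k w \<le> h (n - k) * (g1 k + g2 k)" using hnn by (intro mult_left_mono) auto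
  qed
  also have "\<dots> = (\<Sum>k\<in>{1..n}. h (n - k) * g1 k) + (\<Sum>k\<in>{1..n}. h (n - k) * g2 k)"
    by (simp add: algebra_simps sum.distrib)
  also have "(\<Sum>k\<in>{1..n}. h (n - k) * g1 k) = (\<Sum>k\<in>{1..2}. h (n - k) * g1 k)"
    by (rule sum.mono_neutral_right) (use n2 in \<open>auto simp: g1_def\<close>)
  also have "\<dots> = - e * H" unfolding H_def g1_def by (simp add: numeral_2_eq_2 algebra_simps)
  also have "(\<Sum>k\<in>{1..n}. h (n - k) * g2 k) \<le> (\<Sum>k\<in>{1..n}. (if K \<le> k then r1^2 * H * (s/r1)^k else 0))"
  proof (rule sum_mono)
    fix k assume k: "k \<in> {1..n}"
    show "h (n - k) * g2 k \<le> (if K \<le> k then r1^2 * H * (s/r1)^k else 0)"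
    proof (cases "K \<le> k")
      case True
      have "h (n - k) * g2 k = (r1 ^ k * h (n - k)) * (s/r1)^k"
        using True r unfolding g2_def by (simp add: power_divide)
      also have "\<dots> \<le> r1^2 * H * (s/r1)^k"
        using HL[of k] True K k s r by (intro mult_right_mono) auto
      finally show ?thesis using True by simp
    qed (simp add: g2_def)
  qed
  also have "\<dots> = (\<Sum>k\<in>{K..n}. r1^2 * H * (s/r1)^k)"
    by (rule sum.mono_neutral_cong_right) (use K in auto)
  also have "\<dots> = r1^2 * H * (\<Sum>k\<in>{K..n}. (s/r1)^k)" by (simp add: sum_distrib_left)
  also have "\<dots> \<le> r1^2 * H * (e / r1^2)"
    using geo[of n] hnn unfolding H_def by (intro mult_left_mono) auto
  also have "\<dots> = e * H" using r by simp
  finally show ?thesis by simp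
qed

lemma tail_summ:
  fixes f :: "real \<Rightarrow> real"
  assumes "f \<in> O[at_top](\<lambda>x. ln x powr (-\<alpha>))" "1 < \<alpha>" "1 < s"
  shows "summable (\<lambda>k. f (s^k))"
proof -
  obtain c where c: "c > 0" "eventually (\<lambda>x. norm (f x) \<le> c * norm (ln x powr -\<alpha>)) at_top"
    using assms(1) by (elim landau_o.bigE)
  then obtain x0 where x0: "\<And>x. x \<ge> x0 \<Longrightarrow> norm (f x) \<le> c * norm (ln x powr -\<alpha>)"
    by (auto simp: eventually_at_top_linorder)
  have ev1: "eventually (\<lambda>k. x0 \<le> s^k) sequentially"
  proof -
    have "filterlim (\<lambda>k. norm (s^k)) at_top sequentially"
      by (rule filterlim_at_infinity_imp_norm_at_top[OF filterlim_realpow_sequentially_gt1]) (use assms in simp)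
    then have "eventually (\<lambda>k. x0 \<le> norm (s^k)) sequentially" by (simp add: filterlim_at_top)
    then show ?thesis using assms by simp
  qed
  have ev2: "eventually (\<lambda>k. (1::nat) \<le> k) sequentially" by (rule eventually_ge_at_top)
  have "eventually (\<lambda>k. norm (f (s^k)) \<le> c * ln s powr -\<alpha> * real k powr -\<alpha>) sequentially"
    using ev1 ev2
  proof eventually_elim
    case (elim k)
    have lnpos: "0 < ln s" using assms by simp
    have "norm (f (s^k)) \<le> c * norm (ln (s^k) powr -\<alpha>)" using x0 elim by simp
    also have "ln (s^k) powr -\<alpha> = real k powr -\<alpha> * ln s powr -\<alpha>"
      using assms lnpos by (simp add: ln_realpow powr_mult)
    finally show ?case by (simp add: algebra_simps)
  qed
  moreover have "summable (\<lambda>k. c * ln s powr -\<alpha> * real k powr -\<alpha>)"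
    using summable_real_powr_iff[of "-\<alpha>"] assms by (intro summable_mult) simp
  ultimately show ?thesis by (rule summable_comparison_test_ev)
qed

lemma tail_le:
  fixes g :: "nat \<Rightarrow> real"
  assumes "summable g" "\<And>k. 0 \<le> g k"
  shows "(\<Sum>k\<in>{K..n}. g k) \<le> (\<Sum>i. g (i + K))"
proof (cases "K \<le> n")
  case False
  then show ?thesis using assms by (simp add: suminf_nonneg summable_iff_shift)
next
  case True
  have "(\<Sum>k\<in>{K..n}. g k) = (\<Sum>k\<in>{0+K..(n-K)+K}. g k)" using True by simp
  also have "\<dots> = (\<Sum>i\<in>{0..n-K}. g (i + K))" by (rule sum.shift_bounds_cl_nat_ivl)
  also have "\<dots> \<le> (\<Sum>i. g (i + K))"
    using assms by (intro sum_le_suminf) (auto simp: summable_iff_shift)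
  finally show ?thesis .
qed

lemma prod_ge:
  fixes u :: "nat \<Rightarrow> real"
  assumes "finite S" "\<And>k. k \<in> S \<Longrightarrow> 0 \<le> u k \<and> u k \<le> 1"
  shows "1 - (\<Sum>k\<in>S. 1 - u k) \<le> (\<Prod>k\<in>S. u k)"
  using assms
proof (induction S rule: finite_induct)
  case empty then show ?case by simp
next
  case (insert x F)
  have IH: "1 - (\<Sum>k\<in>F. 1 - u k) \<le> (\<Prod>k\<in>F. u k)" using insert by auto
  have ux: "0 \<le> u x" "u x \<le> 1" using insert by auto
  have S0: "0 \<le> (\<Sum>k\<in>F. 1 - u k)" using insert by (intro sum_nonneg) auto
  have "u x * (1 - (\<Sum>k\<in>F. 1 - u k)) \<le> u x * (\<Prod>k\<in>F. u k)" using IH ux by (intro mult_left_mono) auto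
  moreover have "1 - ((1 - u x) + (\<Sum>k\<in>F. 1 - u k)) \<le> u x * (1 - (\<Sum>k\<in>F. 1 - u k))"
    using ux S0 by (simp add: algebra_simps mult_left_le_one_le)
  ultimately show ?case using insert by simp
qed



theorem theorem1p3:
  fixes M :: "'a measure" and Y :: "nat \<Rightarrow> 'a \<Rightarrow> real" and a1 a2 :: real
  assumes "prob_space M"
    and "(a1, a2) \<in> regionC"
    and indep: "prob_space.indep_vars M (\<lambda>_. borel) Y {1..}"
    and ident: "\<And>n. n \<ge> 1 \<Longrightarrow> distr M borel (Y n) = distr M borel (Y 1)"
    and nondeg: "\<not> (\<exists>c. AE w in M. Y 1 w = c)"
    and neg: "measure M {w \<in> space M. Y 1 w < 0} > 0"
    and tail: "\<exists>\<alpha>>1. (\<lambda>x. measure M {w \<in> space M. Y 1 w \<ge> x})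
                        \<in> O[at_top](\<lambda>x. ln x powr (-\<alpha>))"
  shows "\<forall>x\<ge>0.
           (\<lambda>N. pN M a1 a2 Y N x) \<longlonglongrightarrow> measure M {w \<in> space M. \<forall>n\<ge>1. AR2 a1 a2 Y n w \<le> x}
         \<and> measure M {w \<in> space M. \<forall>n\<ge>1. AR2 a1 a2 Y n w \<le> x} > 0"
proof (intro allI impI conjI)
  interpret P: prob_space M by (rule assms(1))
  fix x :: real assume x: "0 \<le> x"
  obtain r1 r2 where r: "1 < r1" "-r1 \<le> r2" "r2 \<le> r1" "a1 = r1 + r2" "a2 = -(r1*r2)"
    using regionC_roots[OF assms(2)] by blast
  have rv[measurable]: "Y k \<in> borel_measurable M" if "1 \<le> k" for k
    using indep that unfolding P.indep_vars_def2 by auto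
  have Xm[measurable]: "(\<lambda>w. AR2 a1 a2 Y n w) \<in> borel_measurable M" for n
    unfolding AR2_repr[OF r(4,5)] by (intro borel_measurable_sum borel_measurable_times) auto
  define B where "B N = {w \<in> space M. \<forall>n\<in>{1..N}. AR2 a1 a2 Y n w \<le> x}" for N
  have Bs: "B N \<in> sets M" for N unfolding B_def by measurable
  have "(\<lambda>N. measure M (B N)) \<longlonglongrightarrow> measure M (\<Inter>N. B N)"
    by (rule P.finite_Lim_measure_decseq) (use Bs in \<open>auto simp: decseq_def B_def\<close>)
  moreover have "(\<Inter>N. B N) = {w \<in> space M. \<forall>n\<ge>1. AR2 a1 a2 Y n w \<le> x}"
    unfolding B_def by auto (meson atLeastAtMost_iff order_refl)
  ultimately show "(\<lambda>N. pN M a1 a2 Y N x) \<longlonglongrightarrow> measure M {w \<in> space M. \<forall>n\<ge>1. AR2 a1 a2 Y n w \<le> x}"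
    unfolding pN_def B_def by simp
  show "measure M {w \<in> space M. \<forall>n\<ge>1. AR2 a1 a2 Y n w \<le> x} > 0"
  proof -
    define Ai where "Ai i = {w \<in> space M. Y 1 w \<le> -1/real (Suc i)}" for i
    have Ais: "Ai i \<in> sets M" for i unfolding Ai_def by measurable
    have mono_i: "-1/real (Suc i) \<le> -1/real (Suc j)" if "i \<le> j" for i j
      using that by (simp add: divide_simps)
    have "(\<lambda>i. measure M (Ai i)) \<longlonglongrightarrow> measure M (\<Union>i. Ai i)"
      by (rule P.finite_Lim_measure_incseq) (use Ais mono_i in \<open>auto simp: incseq_def Ai_def intro: order_trans\<close>)
    moreover have "(\<Union>i. Ai i) = {w \<in> space M. Y 1 w < 0}"
    proof safe
      fix w i assume "w \<in> Ai i"
      then have "Y 1 w \<le> -1/real (Suc i)" unfolding Ai_def by simp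
      moreover have "0 < 1/real (Suc i)" by simp
      ultimately show "Y 1 w < 0" by linarith
    next
      fix w i assume "w \<in> Ai i" then show "w \<in> space M" unfolding Ai_def by simp
    next
      fix w assume w: "w \<in> space M" "Y 1 w < 0"
      obtain n where "inverse (real (Suc n)) < - Y 1 w" using reals_Archimedean[of "- Y 1 w"] w by auto
      then have "w \<in> Ai n" using w unfolding Ai_def by (simp add: divide_inverse)
      then show "w \<in> (\<Union>i. Ai i)" by blast
    qed
    ultimately have "(\<lambda>i. measure M (Ai i)) \<longlonglongrightarrow> measure M {w \<in> space M. Y 1 w < 0}" by simp
    from order_tendstoD(1)[OF this neg] obtain i where i: "measure M (Ai i) > 0"
      by (auto dest: eventually_happens)
    define e where "e = 1 / real (Suc i)"
    have e: "0 < e" unfolding e_def by simp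
    define p0 where "p0 = measure M (Y 1 -` {..-e} \<inter> space M)"
    have p0: "0 < p0" using i unfolding p0_def Ai_def e_def
      by (simp add: vimage_def Int_def conj_commute)
    obtain \<alpha> where \<alpha>: "1 < \<alpha>" "(\<lambda>x. measure M {w \<in> space M. Y 1 w \<ge> x}) \<in> O[at_top](\<lambda>x. ln x powr (-\<alpha>))"
      using tail by blast
    define s where "s = sqrt r1"
    have s1: "1 < s" unfolding s_def using r by simp
    have ss: "s * s = r1" unfolding s_def using r by simp
    define \<rho> where "\<rho> = s / r1"
    have \<rho>: "0 < \<rho>" "\<rho> < 1" unfolding \<rho>_def using s1 ss r by (auto simp: field_simps)
    define f where "f k = measure M {w \<in> space M. Y 1 w \<ge> s^k}" for k :: nat
    have fsum: "summable f" unfolding f_def by (rule tail_summ[OF \<alpha>(2) \<alpha>(1) s1])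
    have f0: "0 \<le> f k" for k unfolding f_def by simp
    have gsum: "summable (\<lambda>k. \<rho>^k)" using \<rho> by (intro summable_geometric) simp
    have er: "0 < e / r1^2" using e r by simp
    obtain K1 where K1: "\<And>n. n \<ge> K1 \<Longrightarrow> norm (\<Sum>i. \<rho>^(i+n)) < e / r1^2"
      using suminf_exist_split[OF er gsum] by blast
    obtain K2 where K2: "\<And>n. n \<ge> K2 \<Longrightarrow> norm (\<Sum>i. f (i+n)) < 1/2"
      using suminf_exist_split[OF _ fsum, of "1/2"] by auto
    define K where "K = max (max K1 K2) 3"
    have K3: "3 \<le> K" unfolding K_def by simp
    have geo: "(\<Sum>k\<in>{K..n}. (s/r1)^k) \<le> e / r1^2" for n
    proof -
      have "(\<Sum>k\<in>{K..n}. (s/r1)^k) \<le> (\<Sum>i. \<rho>^(i+K))"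
        unfolding \<rho>_def[symmetric] using \<rho> by (intro tail_le gsum) simp
      also have "\<dots> \<le> norm (\<Sum>i. \<rho>^(i+K))" by simp
      also have "\<dots> < e / r1^2" using K1[of K] unfolding K_def by simp
      finally show ?thesis by simp
    qed
    have ftail: "(\<Sum>k\<in>{K..n}. f k) \<le> 1/2" for n
    proof -
      have "(\<Sum>k\<in>{K..n}. f k) \<le> (\<Sum>i. f (i+K))" by (intro tail_le fsum f0)
      also have "\<dots> \<le> norm (\<Sum>i. f (i+K))" by simp
      also have "\<dots> < 1/2" using K2[of K] unfolding K_def by simp
      finally show ?thesis by simp
    qed
    define c where "c k = (if k < K then -e else s^k)" for k
    define A where "A k = Y k -` {..c k} \<inter> space M" for k
    have As: "A k \<in> sets M" if "1 \<le> k" for k unfolding A_def using rv[OF that] by measurable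
    define D where "D m = space M \<inter> (\<Inter>k\<in>{1..m}. A k)" for m
    have Ds: "D m \<in> sets M" for m
    proof (cases "m = 0")
      case True then show ?thesis unfolding D_def by simp
    next
      case False then show ?thesis unfolding D_def using As
        by (intro sets.Int sets.top sets.finite_INT) auto
    qed
    define E where "E = {w \<in> space M. \<forall>k\<ge>1. Y k w \<le> c k}"
    have EI: "(\<Inter>m. D m) = E"
    proof (intro equalityI subsetI)
      fix w assume "w \<in> (\<Inter>m. D m)"
      then have Dk: "w \<in> D k" for k by blast
      have "w \<in> space M" using Dk[of 0] unfolding D_def by simp
      moreover have "Y k w \<le> c k" if "1 \<le> k" for k
        using Dk[of k] that unfolding D_def A_def by auto
      ultimately show "w \<in> E" unfolding E_def by blast
    next
      fix w assume "w \<in> E"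
      then show "w \<in> (\<Inter>m. D m)" unfolding E_def D_def A_def by auto
    qed
    have Esub: "E \<subseteq> {w \<in> space M. \<forall>n\<ge>1. AR2 a1 a2 Y n w \<le> x}"
    proof safe
      fix w and n :: nat assume w: "w \<in> E" and n: "1 \<le> n"
      have "AR2 a1 a2 Y n w \<le> 0"
        by (rule det_bound[OF r e K3 _ geo _ n]) (use s1 w in \<open>auto simp: E_def c_def\<close>)
      then show "AR2 a1 a2 Y n w \<le> x" using x by simp
    qed (simp add: E_def)
    have same: "measure M (Y k -` S \<inter> space M) = measure M (Y 1 -` S \<inter> space M)"
      if "1 \<le> k" "S \<in> sets borel" for k S
      using measure_distr[OF rv[OF that(1)] that(2)] measure_distr[OF rv[of 1] that(2)] ident[OF that(1)]
      by simp
    have Dlow: "p0^(K-1) * (1/2) \<le> measure M (D m)" if m: "K \<le> m" for m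
    proof -
      have DA: "D m = (\<Inter>k\<in>{1..m}. A k)" unfolding D_def A_def using m K3 by auto
      have indp: "P.prob (\<Inter>k\<in>{1..m}. A k) = (\<Prod>k\<in>{1..m}. P.prob (A k))"
      proof -
        have "P.indep_sets (\<lambda>i. {Y i -` S \<inter> space M | S. S \<in> sets borel}) {1..}"
          using indep unfolding P.indep_vars_def2 by simp
        then have "\<forall>J\<subseteq>{1..}. J \<noteq> {} \<longrightarrow> finite J \<longrightarrow> (\<forall>A\<in>Pi J (\<lambda>i. {Y i -` S \<inter> space M | S. S \<in> sets borel}).
             P.prob (\<Inter>j\<in>J. A j) = (\<Prod>j\<in>J. P.prob (A j)))"
          unfolding P.indep_sets_def by blast
        moreover have "A \<in> Pi {1..m} (\<lambda>i. {Y i -` S \<inter> space M | S. S \<in> sets borel})"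
        proof (rule Pi_I)
          fix k
          have "{..c k} \<in> sets borel" by simp
          then show "A k \<in> {Y k -` S \<inter> space M | S. S \<in> sets borel}" unfolding A_def by blast
        qed
        ultimately show ?thesis using m K3 by auto
      qed
      have split: "{1..m} = {1..<K} \<union> {K..m}" using m K3 by auto
      have prodsplit: "(\<Prod>k\<in>{1..m}. P.prob (A k)) = (\<Prod>k\<in>{1..<K}. P.prob (A k)) * (\<Prod>k\<in>{K..m}. P.prob (A k))"
        unfolding split by (rule prod.union_disjoint) auto
      have p1: "(\<Prod>k\<in>{1..<K}. P.prob (A k)) = p0^(K-1)"
      proof -
        have "(\<Prod>k\<in>{1..<K}. P.prob (A k)) = (\<Prod>k\<in>{1..<K}. p0)"
        proof (rule prod.cong[OF refl])
          fix k assume k: "k \<in> {1..<K}"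
          then have "A k = Y k -` {..-e} \<inter> space M" unfolding A_def c_def by simp
          then show "P.prob (A k) = p0" unfolding p0_def using same[of k "{..-e}"] k by simp
        qed
        then show ?thesis by simp
      qed
      have p2: "1/2 \<le> (\<Prod>k\<in>{K..m}. P.prob (A k))"
      proof -
        have q: "1 - P.prob (A k) \<le> f k" if k: "k \<in> {K..m}" for k
        proof -
          have k1: "1 \<le> k" using k K3 by simp
          have "P.prob (A k) = P.prob (Y 1 -` {..s^k} \<inter> space M)"
            using same[of k "{..s^k}"] k1 k unfolding A_def c_def by simp
          moreover have "1 - P.prob (Y 1 -` {..s^k} \<inter> space M) = P.prob (space M - (Y 1 -` {..s^k} \<inter> space M))"
            by (rule P.prob_compl[symmetric]) measurable
          moreover have "P.prob (space M - (Y 1 -` {..s^k} \<inter> space M)) \<le> f k"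
            unfolding f_def by (rule P.finite_measure_mono) auto
          ultimately show ?thesis by simp
        qed
        have "1/2 \<le> 1 - (\<Sum>k\<in>{K..m}. f k)" using ftail[of m] by simp
        also have "\<dots> \<le> 1 - (\<Sum>k\<in>{K..m}. 1 - P.prob (A k))" using sum_mono[of "{K..m}" "\<lambda>k. 1 - P.prob (A k)" f] q by simp
        also have "\<dots> \<le> (\<Prod>k\<in>{K..m}. P.prob (A k))" by (rule prod_ge) auto
        finally show ?thesis .
      qed
      have "p0^(K-1) * (1/2) \<le> p0^(K-1) * (\<Prod>k\<in>{K..m}. P.prob (A k))"
        using p2 p0 by (intro mult_left_mono) auto
      also have "\<dots> = measure M (D m)" unfolding DA indp prodsplit p1 by simp
      finally show ?thesis .
    qed
    have "(\<lambda>m. measure M (D m)) \<longlonglongrightarrow> measure M (\<Inter>m. D m)"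
      by (rule P.finite_Lim_measure_decseq) (use Ds in \<open>auto simp: decseq_def D_def\<close>)
    then have "p0^(K-1) * (1/2) \<le> measure M E" unfolding EI
      by (rule LIMSEQ_le_const) (use Dlow in blast)
    also have "\<dots> \<le> measure M {w \<in> space M. \<forall>n\<ge>1. AR2 a1 a2 Y n w \<le> x}"
      by (rule P.finite_measure_mono[OF Esub]) measurable
    finally have fin: "p0^(K-1) * (1/2) \<le> measure M {w \<in> space M. \<forall>n\<ge>1. AR2 a1 a2 Y n w \<le> x}" .
    have "0 < p0^(K-1) * (1/2)" using p0 by simp
    then show ?thesis using fin by linarith
  qed
qed

end
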